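(* Let $r,m\ge1$, let $\xi$ be an $F^r$-stable irreducible character of $G^{F^{rm}}$ and $\tilde\xi$ any extension of $\xi$ to $G^{F^{rm}}\langle\sigma^r\rangle$. Let $R^{(m)}_{\tilde\xi}=Sh_{F^{rm}/F^r}(f)$, where $f\in C(G^{F^{rm}}/{\sim_{F^r}})$ is $f(x)=\tilde\xi(x\sigma^r)$; this is a class function on $G^{F^r}$. Then $$|G^{F^{rm}}|^{-1}\sum_{\hat g\in G^{F^{rm}}}\tilde\xi(N_r(\hat g)\sigma^r)=|G^F|^{-1}\sum_{g\in G^F}R^{(m)}_{\tilde\xi}(g).$$
   Context: $G$ is a connected algebraic group defined over $\mathbb F_q$ with Frobenius map $F$. For a finite group $\Gamma$ with automorphism $\phi$, $\Gamma/{\sim_\phi}$ is the set of $\phi$-twisted conjugacy classes ($x\sim z^{-1}x\phi(z)$), and $C(Y)$ is the space of $\bar{\mathbb Q}_\ell$-valued functions on $Y$. Norm map: for commuting Frobenius maps $F_1,F_2$ on a connected group $X$ and $x\in X^{F_1}$, choose $\alpha\in X$ with $x=\alpha^{-1}F_2(\alpha)$ and put $x'=F_1(\alpha)\alpha^{-1}\in X^{F_2}$; this induces a bijection $N_{F_1/F_2}:X^{F_1}/{\sim_{F_2}}\to X^{F_2}/{\sim_{F_1^{-1}}}$. Shintani descent $Sh_{F_1/F_2}:C(X^{F_1}/{\sim_{F_2}})\to C(X^{F_2}/{\sim_{F_1^{-1}}})$ is $Sh_{F_1/F_2}(f)(N_{F_1/F_2}(x))=f(x)$. Here $F_1=F^{rm}$,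 $F_2=F^r$, and $F^{rm}$ acts trivially on $G^{F^r}$, so the target is the space of class functions on $G^{F^r}$. $\sigma=F|_{G^{F^{rm}}}$, $G^{F^{rm}}\langle\sigma\rangle$ is the semidirect product with the cyclic group of order $rm$ generated by $\sigma$ ($\sigma g\sigma^{-1}=F(g)$), and $G^{F^{rm}}\langle\sigma^r\rangle$ its subgroup generated by $G^{F^{rm}}$ and $\sigma^r$. For $x\in G^{F^{rm}}$, $N_k(x)=xF(x)\cdots F^{k-1}(x)$. *)

theory Defs
  imports "HOL-Algebra.Group" "Jordan_Normal_Form.Matrix" "HOL.Complex"
begin

definition fixpts :: "('g, 'b) monoid_scheme \<Rightarrow> ('g \<Rightarrow> 'g) \<Rightarrow> 'g set" where
  "fixpts G \<phi> = {x \<in> carrier G. \<phi> x = x}"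

text \<open>A connected algebraic group over F_q with Frobenius map F is modelled by a
group G with a bijective endomorphism F all of whose powers F^k (k >= 1) have finitely
many fixed points and satisfy Lang's theorem (surjectivity of the Lang map).\<close>
definition frobenius_setting :: "('g, 'b) monoid_scheme \<Rightarrow> ('g \<Rightarrow> 'g) \<Rightarrow> bool" where
  "frobenius_setting G F \<longleftrightarrow> group G \<and> F \<in> hom G G \<and> bij_betw F (carrier G) (carrier G) \<and>
     (\<forall>k\<ge>1. finite (fixpts G (F ^^ k))) \<and>
     (\<forall>k\<ge>1. \<forall>x\<in>carrier G. \<exists>\<alpha>\<in>carrier G. x = inv\<^bsub>G\<^esub> \<alpha> \<otimes>\<^bsub>G\<^esub> (F ^^ k) \<alpha>)"

fun normk :: "('g, 'b) monoid_scheme \<Rightarrow> ('g \<Rightarrow> 'g) \<Rightarrow> nat \<Rightarrow> 'g \<Rightarrow> 'g" where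
  "normk G F 0 x = \<one>\<^bsub>G\<^esub>"
| "normk G F (Suc k) x = normk G F k x \<otimes>\<^bsub>G\<^esub> (F ^^ k) x"

definition norm_rel :: "('g, 'b) monoid_scheme \<Rightarrow> ('g \<Rightarrow> 'g) \<Rightarrow> ('g \<Rightarrow> 'g) \<Rightarrow> 'g \<Rightarrow> 'g \<Rightarrow> bool" where
  "norm_rel G F1 F2 x x' \<longleftrightarrow>
     (\<exists>\<alpha>\<in>carrier G. x = inv\<^bsub>G\<^esub> \<alpha> \<otimes>\<^bsub>G\<^esub> F2 \<alpha> \<and> x' = F1 \<alpha> \<otimes>\<^bsub>G\<^esub> inv\<^bsub>G\<^esub> \<alpha>)"

definition twisted_conj :: "('g, 'b) monoid_scheme \<Rightarrow> ('g \<Rightarrow> 'g) \<Rightarrow> 'g set \<Rightarrow> 'g \<Rightarrow> 'g \<Rightarrow> bool" where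
  "twisted_conj G \<phi> H x y \<longleftrightarrow> (\<exists>z\<in>H. y = inv\<^bsub>G\<^esub> z \<otimes>\<^bsub>G\<^esub> x \<otimes>\<^bsub>G\<^esub> \<phi> z)"

text \<open>Sh_{F1/F2}(f)(N(x)) = f(x): the value at g is f(x) for any x in G^{F1} whose norm class
is the F1^{-1}-twisted class of g in G^{F2}.\<close>
definition shintani :: "('g, 'b) monoid_scheme \<Rightarrow> ('g \<Rightarrow> 'g) \<Rightarrow> ('g \<Rightarrow> 'g) \<Rightarrow> ('g \<Rightarrow> 'c) \<Rightarrow> 'g \<Rightarrow> 'c" where
  "shintani G F1 F2 f g = f (SOME x. x \<in> fixpts G F1 \<and>
      (\<exists>x'. norm_rel G F1 F2 x x' \<and> x' \<in> fixpts G F2 \<and>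
            twisted_conj G (inv_into (carrier G) F1) (fixpts G F2) x' g))"

section \<open>Characters (over the complex numbers, standing in for Qbar_l)\<close>

definition mat_trace :: "complex mat \<Rightarrow> complex" where
  "mat_trace A = (\<Sum>i<dim_row A. A $$ (i, i))"

definition is_rep :: "('a, 'b) monoid_scheme \<Rightarrow> nat \<Rightarrow> ('a \<Rightarrow> complex mat) \<Rightarrow> bool" where
  "is_rep H n \<rho> \<longleftrightarrow> (\<forall>g\<in>carrier H. \<rho> g \<in> carrier_mat n n) \<and>
      \<rho> \<one>\<^bsub>H\<^esub> = 1\<^sub>m n \<and>
      (\<forall>g\<in>carrier H. \<forall>h\<in>carrier H. \<rho> (g \<otimes>\<^bsub>H\<^esub> h) = \<rho> g * \<rho> h)"

definition is_subspace :: "nat \<Rightarrow> complex vec set \<Rightarrow> bool" where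
  "is_subspace n W \<longleftrightarrow> W \<subseteq> carrier_vec n \<and> 0\<^sub>v n \<in> W \<and>
      (\<forall>v\<in>W. \<forall>w\<in>W. v + w \<in> W) \<and> (\<forall>c. \<forall>v\<in>W. c \<cdot>\<^sub>v v \<in> W)"

definition is_irred_rep :: "('a, 'b) monoid_scheme \<Rightarrow> nat \<Rightarrow> ('a \<Rightarrow> complex mat) \<Rightarrow> bool" where
  "is_irred_rep H n \<rho> \<longleftrightarrow> is_rep H n \<rho> \<and> n > 0 \<and>
      \<not> (\<exists>W. is_subspace n W \<and> W \<noteq> {0\<^sub>v n} \<and> W \<noteq> carrier_vec n \<and>
             (\<forall>g\<in>carrier H. \<forall>w\<in>W. \<rho> g *\<^sub>v w \<in> W))"

definition is_character :: "('a, 'b) monoid_scheme \<Rightarrow> ('a \<Rightarrow> complex) \<Rightarrow> bool" where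
  "is_character H \<chi> \<longleftrightarrow> (\<exists>n \<rho>. is_rep H n \<rho> \<and> (\<forall>g\<in>carrier H. \<chi> g = mat_trace (\<rho> g)))"

definition is_irred_character :: "('a, 'b) monoid_scheme \<Rightarrow> ('a \<Rightarrow> complex) \<Rightarrow> bool" where
  "is_irred_character H \<chi> \<longleftrightarrow>
     (\<exists>n \<rho>. is_irred_rep H n \<rho> \<and> (\<forall>g\<in>carrier H. \<chi> g = mat_trace (\<rho> g)))"

text \<open>Elements (x, k) stand for x sigma^k with k taken mod rm; sigma g sigma^-1 = F(g).
Only the k divisible by r occur (subgroup generated by G^{F^{rm}} and sigma^r).\<close>
definition fix_group :: "('g, 'b) monoid_scheme \<Rightarrow> ('g \<Rightarrow> 'g) \<Rightarrow> 'g monoid" where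
  "fix_group G \<phi> = \<lparr>carrier = fixpts G \<phi>, mult = mult G, one = one G\<rparr>"

definition sigma_ext_group :: "('g, 'b) monoid_scheme \<Rightarrow> ('g \<Rightarrow> 'g) \<Rightarrow> nat \<Rightarrow> nat \<Rightarrow> ('g \<times> nat) monoid" where
  "sigma_ext_group G F r m =
     \<lparr>carrier = {(x, k). x \<in> fixpts G (F ^^ (r * m)) \<and> k < r * m \<and> r dvd k},
      mult = (\<lambda>(x, a) (y, b). (x \<otimes>\<^bsub>G\<^esub> (F ^^ a) y, (a + b) mod (r * m))),
      one = (\<one>\<^bsub>G\<^esub>, 0)\<rparr>"

end

theory Submission
  imports Defs
begin

lemma mat_trace_comm:
  assumes "A \<in> carrier_mat n n" "B \<in> carrier_mat n n"
  shows "mat_trace (A * B) = mat_trace (B * A)"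
proof -
  have "mat_trace (A * B) = (\<Sum>i<n. \<Sum>k<n. A $$ (i,k) * B $$ (k,i))"
    using assms by (simp add: mat_trace_def scalar_prod_def row_def col_def atLeast0LessThan)
  also have "\<dots> = (\<Sum>k<n. \<Sum>i<n. B $$ (k,i) * A $$ (i,k))"
    by (subst sum.swap) (simp add: mult.commute)
  also have "\<dots> = mat_trace (B * A)"
    using assms by (simp add: mat_trace_def scalar_prod_def row_def col_def atLeast0LessThan)
  finally show ?thesis .
qed

lemma sum_by_fibers:
  fixes h :: "'a \<Rightarrow> 'c::comm_semiring_1"
  assumes "finite T" "\<And>\<alpha>. \<alpha>\<in>S \<Longrightarrow> p \<alpha> \<in> T"
    "\<And>y. y\<in>T \<Longrightarrow> finite {\<alpha>\<in>S. p \<alpha> = y}"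
    "\<And>y. y\<in>T \<Longrightarrow> card {\<alpha>\<in>S. p \<alpha> = y} = c"
    "\<And>\<alpha>. \<alpha>\<in>S \<Longrightarrow> h \<alpha> = k (p \<alpha>)"
  shows "sum h S = of_nat c * sum k T"
proof -
  have S: "S = (\<Union>y\<in>T. {\<alpha>\<in>S. p \<alpha> = y})" using assms(2) by auto
  have fS: "finite S" by (subst S) (use assms(1,3) in auto)
  have "sum h S = (\<Sum>y\<in>T. sum h {\<alpha>\<in>S. p \<alpha> = y})"
    by (rule sum.group[symmetric]) (use fS assms(1,2) in auto)
  also have "\<dots> = (\<Sum>y\<in>T. of_nat c * k y)"
  proof (rule sum.cong[OF refl])
    fix y assume y: "y \<in> T"
    have "sum h {\<alpha>\<in>S. p \<alpha> = y} = sum (\<lambda>_. k y) {\<alpha>\<in>S. p \<alpha> = y}"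
      by (rule sum.cong) (use assms(5) in auto)
    thus "sum h {\<alpha>\<in>S. p \<alpha> = y} = of_nat c * k y" using assms(4)[OF y] by simp
  qed
  finally show ?thesis by (simp add: sum_distrib_left)
qed


locale frobctx = group G for G :: "('g, 'b) monoid_scheme" (structure) +
  fixes F :: "'g \<Rightarrow> 'g"
  assumes Fhom: "F \<in> hom G G" and Fbij: "bij_betw F (carrier G) (carrier G)"
begin

lemma Fk_closed[simp, intro]: "x \<in> carrier G \<Longrightarrow> (F ^^ k) x \<in> carrier G"
  by (induction k) (use Fhom in \<open>auto simp: hom_def\<close>)

lemma F_closed[simp, intro]: "x \<in> carrier G \<Longrightarrow> F x \<in> carrier G"
  using Fk_closed[of x 1] by simp

lemma Fk_mult[simp]: "x \<in> carrier G \<Longrightarrow> y \<in> carrier G \<Longrightarrow> (F ^^ k) (x \<otimes> y) = (F ^^ k) x \<otimes> (F ^^ k) y"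
  by (induction k) (use Fhom in \<open>auto simp: hom_def\<close>)

lemma Fk_one[simp]: "(F ^^ k) \<one> = \<one>"
proof (induction k)
  case (Suc k)
  have "F \<one> = \<one>" using Fhom by (intro group_hom.hom_one) (unfold_locales)
  then show ?case using Suc by simp
qed simp

lemma Fk_inv[simp]: "x \<in> carrier G \<Longrightarrow> (F ^^ k) (inv x) = inv ((F ^^ k) x)"
proof -
  assume x: "x \<in> carrier G"
  have "(F ^^ k) (inv x) \<otimes> (F ^^ k) x = \<one>"
    using x by (simp flip: Fk_mult)
  thus ?thesis using x by (simp add: inv_equality)
qed

lemma Fk_comp[simp]: "(F ^^ a) ((F ^^ b) x) = (F ^^ (a + b)) x"
  by (simp add: funpow_add)

lemma Fk_inj: "inj_on (F ^^ k) (carrier G)"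
  using bij_betw_funpow[OF Fbij] bij_betw_def by blast

lemma Fk_bij: "bij_betw (F ^^ k) (carrier G) (carrier G)"
  using bij_betw_funpow[OF Fbij] by blast

lemma F1: "(F ^^ 1) = F" by simp

lemma fix_pow: "x \<in> fixpts G F \<Longrightarrow> x \<in> fixpts G (F ^^ k)"
  by (induction k) (auto simp: fixpts_def)

lemma fixpts_one[simp]: "\<one> \<in> fixpts G (F ^^ k)" by (simp add: fixpts_def)

lemma normk_tele: "\<alpha> \<in> carrier G \<Longrightarrow> normk G F k (inv \<alpha> \<otimes> F \<alpha>) = inv \<alpha> \<otimes> (F ^^ k) \<alpha>"
proof (induction k)
  case 0 then show ?case by simp
next
  case (Suc k)
  have "normk G F (Suc k) (inv \<alpha> \<otimes> F \<alpha>) = inv \<alpha> \<otimes> (F ^^ k) \<alpha> \<otimes> (inv ((F ^^ k) \<alpha>) \<otimes> (F ^^ k) (F \<alpha>))"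
    using Suc by simp
  also have "(F ^^ k) (F \<alpha>) = (F ^^ Suc k) \<alpha>" by (simp add: funpow_swap1)
  finally show ?case using Suc.prems by (simp add: m_assoc[symmetric]) (simp add: m_assoc)
qed

lemma A_eq:
  assumes x: "x \<in> carrier G" and y: "y \<in> carrier G"
    and e: "(F ^^ a) x \<otimes> inv x = (F ^^ a) y \<otimes> inv y"
  shows "inv x \<otimes> y \<in> fixpts G (F ^^ a)"
proof -
  let ?X = "(F ^^ a) x" and ?Y = "(F ^^ a) y"
  have "?X \<otimes> inv x \<otimes> y = ?Y \<otimes> inv y \<otimes> y" using e by simp
  hence "?Y = ?X \<otimes> (inv x \<otimes> y)" using x y by (simp add: m_assoc)
  hence eq: "inv x \<otimes> y = inv ?X \<otimes> ?Y" using x y by (subst inv_solve_left) auto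
  have "(F ^^ a) (inv x \<otimes> y) = inv ?X \<otimes> ?Y" using x y by simp
  hence "(F ^^ a) (inv x \<otimes> y) = inv x \<otimes> y" by (rule trans[OF _ eq[symmetric]])
  thus ?thesis using x y by (simp add: fixpts_def)
qed

lemma shintani_eq:
  fixes f :: "'g \<Rightarrow> 'c"
  assumes \<alpha>: "\<alpha> \<in> carrier G"
    and g: "(F ^^ a) \<alpha> \<otimes> inv \<alpha> \<in> fixpts G (F ^^ b)"
    and cl: "\<And>h y. h \<in> fixpts G (F ^^ a) \<Longrightarrow> y \<in> fixpts G (F ^^ a) \<Longrightarrow>
                f (inv h \<otimes> y \<otimes> (F ^^ b) h) = f y"
  shows "shintani G (F ^^ a) (F ^^ b) f ((F ^^ a) \<alpha> \<otimes> inv \<alpha>) = f (inv \<alpha> \<otimes> (F ^^ b) \<alpha>)"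
proof -
  define F1 where "F1 = F ^^ a"
  define F2 where "F2 = F ^^ b"
  define g where "g = F1 \<alpha> \<otimes> inv \<alpha>"
  have gc: "g \<in> carrier G" using \<alpha> by (simp add: g_def F1_def)
  have gF: "F2 g = g" using g by (simp add: fixpts_def g_def F1_def F2_def)
  have comm: "F1 (F2 x) = F2 (F1 x)" for x by (simp add: F1_def F2_def add.commute)
  have F1\<alpha>: "F1 \<alpha> = g \<otimes> \<alpha>" using \<alpha> by (simp add: g_def F1_def m_assoc)
  define P where "P x \<longleftrightarrow> x \<in> fixpts G F1 \<and>
      (\<exists>x'. norm_rel G F1 F2 x x' \<and> x' \<in> fixpts G F2 \<and>
            twisted_conj G (inv_into (carrier G) F1) (fixpts G F2) x' g)" for x
  have inv1: "inv_into (carrier G) F1 \<one> = \<one>"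
    using Fk_inj[of a] by (intro inv_into_f_eq) (auto simp: F1_def)
  have Bfix: "inv \<alpha> \<otimes> F2 \<alpha> \<in> fixpts G F1"
  proof -
    have "F1 (inv \<alpha> \<otimes> F2 \<alpha>) = inv (F1 \<alpha>) \<otimes> F2 (F1 \<alpha>)"
      using \<alpha> by (simp add: F1_def F2_def add.commute)
    also have "\<dots> = inv \<alpha> \<otimes> F2 \<alpha>" using \<alpha> gc gF
      by (simp add: F1\<alpha> F2_def inv_mult_group m_assoc[symmetric]) (simp add: m_assoc)
    finally show ?thesis using \<alpha> by (simp add: fixpts_def F2_def)
  qed
  have "P (inv \<alpha> \<otimes> F2 \<alpha>)"
    unfolding P_def
  proof (intro conjI exI)
    show "norm_rel G F1 F2 (inv \<alpha> \<otimes> F2 \<alpha>) g" unfolding norm_rel_def g_def using \<alpha> by blast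
    show "g \<in> fixpts G F2" using g by (simp add: g_def F1_def F2_def)
    show "twisted_conj G (inv_into (carrier G) F1) (fixpts G F2) g g"
      unfolding twisted_conj_def using gc
      by (intro bexI[of _ \<one>]) (auto simp: inv1 F2_def)
  qed (rule Bfix)
  hence "P (SOME x. P x)" by (rule someI)
  then obtain x' \<beta> z where x0: "(SOME x. P x) \<in> fixpts G F1"
    and \<beta>: "\<beta> \<in> carrier G" and x0e: "(SOME x. P x) = inv \<beta> \<otimes> F2 \<beta>"
    and x'e: "x' = F1 \<beta> \<otimes> inv \<beta>"
    and z: "z \<in> fixpts G F2" and ge: "g = inv z \<otimes> x' \<otimes> inv_into (carrier G) F1 z"
    unfolding P_def norm_rel_def twisted_conj_def by blast
  define w where "w = inv_into (carrier G) F1 z"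
  have zc: "z \<in> carrier G" using z by (simp add: fixpts_def)
  have zim: "z \<in> F1 ` carrier G" using Fk_bij[of a] zc by (simp add: bij_betw_def F1_def)
  have wc: "w \<in> carrier G" unfolding w_def by (rule inv_into_into[OF zim])
  have F1w: "F1 w = z" unfolding w_def by (rule f_inv_into_f[OF zim])
  have F2w: "F2 w = w"
  proof -
    have "F1 (F2 w) = F1 w" using comm[of w] F1w z by (simp add: fixpts_def)
    thus ?thesis using Fk_inj[of a] wc by (auto simp: F1_def F2_def inj_on_def)
  qed
  define \<gamma> where "\<gamma> = inv w \<otimes> \<beta>"
  have \<gamma>c: "\<gamma> \<in> carrier G" using wc \<beta> by (simp add: \<gamma>_def)
  have ge': "g = inv z \<otimes> x' \<otimes> w" using ge by (simp add: w_def)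
  have F1\<gamma>: "F1 \<gamma> = inv z \<otimes> F1 \<beta>"
  proof -
    have "F1 \<gamma> = inv (F1 w) \<otimes> F1 \<beta>" using wc \<beta> by (simp add: \<gamma>_def F1_def)
    thus ?thesis by (simp only: F1w)
  qed
  have A\<gamma>: "F1 \<gamma> \<otimes> inv \<gamma> = g"
  proof -
    have "F1 \<beta> \<in> carrier G" using \<beta> by (simp add: F1_def)
    thus ?thesis unfolding F1\<gamma> unfolding ge' x'e \<gamma>_def
      using wc \<beta> zc by (simp add: inv_mult_group m_assoc)
  qed
  define h where "h = inv \<gamma> \<otimes> \<alpha>"
  have hfix: "h \<in> fixpts G F1" unfolding h_def F1_def
    by (rule A_eq[OF \<gamma>c \<alpha>]) (use A\<gamma> in \<open>simp add: g_def F1_def\<close>)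
  have hc: "h \<in> carrier G" using \<gamma>c \<alpha> by (simp add: h_def)
  have \<alpha>e: "\<alpha> = \<gamma> \<otimes> h" using \<gamma>c \<alpha> by (simp add: h_def m_assoc[symmetric])
  have Bg: "inv \<gamma> \<otimes> F2 \<gamma> = (SOME x. P x)"
    using wc \<beta> F2w by (simp add: x0e \<gamma>_def F2_def inv_mult_group m_assoc)
      (simp add: m_assoc[symmetric])
  have "inv \<alpha> \<otimes> F2 \<alpha> = inv h \<otimes> (inv \<gamma> \<otimes> F2 \<gamma>) \<otimes> F2 h"
    using \<gamma>c hc by (simp add: \<alpha>e F2_def inv_mult_group m_assoc)
  also have "\<dots> = inv h \<otimes> (SOME x. P x) \<otimes> F2 h" by (simp add: Bg)
  finally have "f (inv \<alpha> \<otimes> F2 \<alpha>) = f (SOME x. P x)"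
    using cl[OF hfix[unfolded F1_def] x0[unfolded F1_def]] by (simp add: F2_def)
  thus ?thesis by (simp add: shintani_def P_def F1_def F2_def g_def)
qed

lemma F_mult[simp]: "x \<in> carrier G \<Longrightarrow> y \<in> carrier G \<Longrightarrow> F (x \<otimes> y) = F x \<otimes> F y"
  using Fk_mult[of x y 1] by simp

lemma F_inv[simp]: "x \<in> carrier G \<Longrightarrow> F (inv x) = inv (F x)"
  using Fk_inv[of x 1] by simp

lemma C_to_fix:
  assumes \<alpha>: "\<alpha> \<in> carrier G" and g: "(F ^^ a) \<alpha> \<otimes> inv \<alpha> \<in> fixpts G F"
  shows "inv \<alpha> \<otimes> F \<alpha> \<in> fixpts G (F ^^ a)"
proof -
  define g where "g = (F ^^ a) \<alpha> \<otimes> inv \<alpha>"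
  have gc: "g \<in> carrier G" and Fg: "F g = g" using g by (auto simp: fixpts_def g_def)
  have e1: "(F ^^ a) \<alpha> = g \<otimes> \<alpha>" using \<alpha> by (simp add: g_def m_assoc)
  have "(F ^^ a) (inv \<alpha> \<otimes> F \<alpha>) = inv ((F ^^ a) \<alpha>) \<otimes> F ((F ^^ a) \<alpha>)"
    using \<alpha> by (simp add: funpow_swap1)
  also have "\<dots> = inv (g \<otimes> \<alpha>) \<otimes> F (g \<otimes> \<alpha>)" by (simp only: e1)
  also have "\<dots> = inv \<alpha> \<otimes> F \<alpha>" using gc \<alpha> Fg
    by (simp add: inv_mult_group m_assoc) (simp add: m_assoc[symmetric])
  finally show ?thesis using \<alpha> by (simp add: fixpts_def)
qed

lemma fix_to_C:
  assumes \<alpha>: "\<alpha> \<in> carrier G" and y: "inv \<alpha> \<otimes> F \<alpha> \<in> fixpts G (F ^^ a)"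
  shows "(F ^^ a) \<alpha> \<otimes> inv \<alpha> \<in> fixpts G F"
proof -
  define y where "y = inv \<alpha> \<otimes> F \<alpha>"
  have yc: "y \<in> carrier G" and Fy: "(F ^^ a) y = y" using y by (auto simp: fixpts_def y_def)
  have e1: "F \<alpha> = \<alpha> \<otimes> y" using \<alpha> by (simp add: y_def m_assoc[symmetric])
  have "F ((F ^^ a) \<alpha> \<otimes> inv \<alpha>) = (F ^^ a) (F \<alpha>) \<otimes> inv (F \<alpha>)"
    using \<alpha> by (simp add: funpow_swap1)
  also have "\<dots> = (F ^^ a) (\<alpha> \<otimes> y) \<otimes> inv (\<alpha> \<otimes> y)" by (simp only: e1)
  also have "\<dots> = (F ^^ a) \<alpha> \<otimes> inv \<alpha>" using yc \<alpha> Fy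
    by (simp add: inv_mult_group m_assoc) (simp add: m_assoc[symmetric])
  finally show ?thesis using \<alpha> by (simp add: fixpts_def)
qed

lemma main_count:
  fixes f :: "'g \<Rightarrow> 'c::comm_semiring_1"
  assumes lang: "\<And>k x. k \<ge> 1 \<Longrightarrow> x \<in> carrier G \<Longrightarrow> \<exists>\<alpha>\<in>carrier G. x = inv \<alpha> \<otimes> (F ^^ k) \<alpha>"
    and fin: "\<And>k. k \<ge> 1 \<Longrightarrow> finite (fixpts G (F ^^ k))"
    and a: "a \<ge> 1"
    and cl: "\<And>h y. h \<in> fixpts G (F ^^ a) \<Longrightarrow> y \<in> fixpts G (F ^^ a) \<Longrightarrow>
                f (inv h \<otimes> y \<otimes> (F ^^ b) h) = f y"
  shows "of_nat (card (fixpts G F)) * (\<Sum>x\<in>fixpts G (F ^^ a). f (normk G F b x))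
       = of_nat (card (fixpts G (F ^^ a))) * (\<Sum>g\<in>fixpts G F. shintani G (F ^^ a) (F ^^ b) f g)"
proof -
  define S where "S = {\<alpha> \<in> carrier G. (F ^^ a) \<alpha> \<otimes> inv \<alpha> \<in> fixpts G F}"
  have finF: "finite (fixpts G F)" using fin[of 1] by simp
  have finA: "finite (fixpts G (F ^^ a))" using fin a by simp
  have fixc: "x \<in> fixpts G \<phi> \<Longrightarrow> x \<in> carrier G" for x \<phi> by (simp add: fixpts_def)
  have "sum (\<lambda>\<alpha>. f (inv \<alpha> \<otimes> (F ^^ b) \<alpha>)) S
      = of_nat (card (fixpts G F)) * (\<Sum>x\<in>fixpts G (F ^^ a). f (normk G F b x))"
  proof (rule sum_by_fibers[where p = "\<lambda>\<alpha>. inv \<alpha> \<otimes> F \<alpha>"])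
    show "finite (fixpts G (F ^^ a))" by (rule finA)
    show "inv \<alpha> \<otimes> F \<alpha> \<in> fixpts G (F ^^ a)" if "\<alpha> \<in> S" for \<alpha>
      using that C_to_fix by (auto simp: S_def)
    show "f (inv \<alpha> \<otimes> (F ^^ b) \<alpha>) = f (normk G F b (inv \<alpha> \<otimes> F \<alpha>))" if "\<alpha> \<in> S" for \<alpha>
      using that by (simp add: S_def normk_tele)
    fix y assume y: "y \<in> fixpts G (F ^^ a)"
    obtain \<alpha>0 where \<alpha>0: "\<alpha>0 \<in> carrier G" and y0: "y = inv \<alpha>0 \<otimes> F \<alpha>0"
      using lang[of 1 y] fixc[OF y] by auto
    have F\<alpha>0: "F \<alpha>0 = \<alpha>0 \<otimes> y" using \<alpha>0 by (simp add: y0 m_assoc[symmetric])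
    have yc: "y \<in> carrier G" using fixc[OF y] .
    have fib: "{\<alpha> \<in> S. inv \<alpha> \<otimes> F \<alpha> = y} = (\<lambda>k. k \<otimes> \<alpha>0) ` fixpts G F"
    proof (intro equalityI subsetI)
      fix \<alpha> assume "\<alpha> \<in> {\<alpha> \<in> S. inv \<alpha> \<otimes> F \<alpha> = y}"
      hence \<alpha>: "\<alpha> \<in> carrier G" and ye: "inv \<alpha> \<otimes> F \<alpha> = y" by (auto simp: S_def)
      have F\<alpha>: "F \<alpha> = \<alpha> \<otimes> y" using \<alpha> by (simp add: ye[symmetric] m_assoc[symmetric])
      have kfix: "\<alpha> \<otimes> inv \<alpha>0 \<in> fixpts G F"
        using \<alpha> \<alpha>0 yc by (simp add: fixpts_def F\<alpha> F\<alpha>0 inv_mult_group m_assoc) (simp add: m_assoc[symmetric])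
      have "\<alpha> = (\<alpha> \<otimes> inv \<alpha>0) \<otimes> \<alpha>0" using \<alpha> \<alpha>0 by (simp add: m_assoc)
      thus "\<alpha> \<in> (\<lambda>k. k \<otimes> \<alpha>0) ` fixpts G F" using kfix by blast
    next
      fix \<alpha> assume "\<alpha> \<in> (\<lambda>k. k \<otimes> \<alpha>0) ` fixpts G F"
      then obtain k where k: "k \<in> fixpts G F" and \<alpha>e: "\<alpha> = k \<otimes> \<alpha>0" by blast
      have kc: "k \<in> carrier G" and Fk: "F k = k" using k by (auto simp: fixpts_def)
      have \<alpha>c: "\<alpha> \<in> carrier G" using kc \<alpha>0 by (simp add: \<alpha>e)
      have Ce: "inv \<alpha> \<otimes> F \<alpha> = y" using kc \<alpha>0 Fk
        by (simp add: \<alpha>e y0 inv_mult_group m_assoc) (simp add: m_assoc[symmetric])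
      have "(F ^^ a) \<alpha> \<otimes> inv \<alpha> \<in> fixpts G F" by (rule fix_to_C[OF \<alpha>c]) (simp add: Ce y)
      thus "\<alpha> \<in> {\<alpha> \<in> S. inv \<alpha> \<otimes> F \<alpha> = y}" using \<alpha>c Ce by (simp add: S_def)
    qed
    have inj: "inj_on (\<lambda>k. k \<otimes> \<alpha>0) (fixpts G F)"
      using \<alpha>0 by (auto simp: inj_on_def fixpts_def)
    show "finite {\<alpha> \<in> S. inv \<alpha> \<otimes> F \<alpha> = y}" unfolding fib using finF by simp
    show "card {\<alpha> \<in> S. inv \<alpha> \<otimes> F \<alpha> = y} = card (fixpts G F)"
      unfolding fib using inj by (simp add: card_image)
  qed
  moreover have "sum (\<lambda>\<alpha>. f (inv \<alpha> \<otimes> (F ^^ b) \<alpha>)) S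
      = of_nat (card (fixpts G (F ^^ a))) * (\<Sum>g\<in>fixpts G F. shintani G (F ^^ a) (F ^^ b) f g)"
  proof (rule sum_by_fibers[where p = "\<lambda>\<alpha>. (F ^^ a) \<alpha> \<otimes> inv \<alpha>"])
    show "finite (fixpts G F)" by (rule finF)
    show "(F ^^ a) \<alpha> \<otimes> inv \<alpha> \<in> fixpts G F" if "\<alpha> \<in> S" for \<alpha>
      using that by (auto simp: S_def)
    show "f (inv \<alpha> \<otimes> (F ^^ b) \<alpha>) = shintani G (F ^^ a) (F ^^ b) f ((F ^^ a) \<alpha> \<otimes> inv \<alpha>)"
      if "\<alpha> \<in> S" for \<alpha>
      using that shintani_eq[of \<alpha> a b f] cl fix_pow by (auto simp: S_def)
    fix g assume g: "g \<in> fixpts G F"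
    have gc: "g \<in> carrier G" using fixc[OF g] .
    obtain \<beta> where \<beta>: "\<beta> \<in> carrier G" and g0: "inv g = inv \<beta> \<otimes> (F ^^ a) \<beta>"
      using lang[OF a, of "inv g"] gc by auto
    define \<alpha>0 where "\<alpha>0 = inv \<beta>"
    have \<alpha>0: "\<alpha>0 \<in> carrier G" using \<beta> by (simp add: \<alpha>0_def)
    have A0: "(F ^^ a) \<alpha>0 \<otimes> inv \<alpha>0 = g"
    proof -
      have "inv (inv g) = inv (inv \<beta> \<otimes> (F ^^ a) \<beta>)" by (simp only: g0)
      thus ?thesis using gc \<beta> by (simp add: \<alpha>0_def inv_mult_group)
    qed
    have fib: "{\<alpha> \<in> S. (F ^^ a) \<alpha> \<otimes> inv \<alpha> = g} = (\<lambda>h. \<alpha>0 \<otimes> h) ` fixpts G (F ^^ a)"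
    proof (intro equalityI subsetI)
      fix \<alpha> assume "\<alpha> \<in> {\<alpha> \<in> S. (F ^^ a) \<alpha> \<otimes> inv \<alpha> = g}"
      hence \<alpha>: "\<alpha> \<in> carrier G" and ge: "(F ^^ a) \<alpha> \<otimes> inv \<alpha> = g" by (auto simp: S_def)
      have hfix: "inv \<alpha>0 \<otimes> \<alpha> \<in> fixpts G (F ^^ a)"
        by (rule A_eq[OF \<alpha>0 \<alpha>]) (simp add: A0 ge)
      have "\<alpha> = \<alpha>0 \<otimes> (inv \<alpha>0 \<otimes> \<alpha>)" using \<alpha> \<alpha>0 by (simp add: m_assoc[symmetric])
      thus "\<alpha> \<in> (\<lambda>h. \<alpha>0 \<otimes> h) ` fixpts G (F ^^ a)" using hfix by blast
    next
      fix \<alpha> assume "\<alpha> \<in> (\<lambda>h. \<alpha>0 \<otimes> h) ` fixpts G (F ^^ a)"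
      then obtain h where h: "h \<in> fixpts G (F ^^ a)" and \<alpha>e: "\<alpha> = \<alpha>0 \<otimes> h" by blast
      have hc: "h \<in> carrier G" and Fh: "(F ^^ a) h = h" using h by (auto simp: fixpts_def)
      have \<alpha>c: "\<alpha> \<in> carrier G" using hc \<alpha>0 by (simp add: \<alpha>e)
      have "(F ^^ a) \<alpha> \<otimes> inv \<alpha> = (F ^^ a) \<alpha>0 \<otimes> inv \<alpha>0"
        using hc \<alpha>0 Fh by (simp add: \<alpha>e inv_mult_group m_assoc) (simp add: m_assoc[symmetric])
      hence Ae: "(F ^^ a) \<alpha> \<otimes> inv \<alpha> = g" using A0 by simp
      thus "\<alpha> \<in> {\<alpha> \<in> S. (F ^^ a) \<alpha> \<otimes> inv \<alpha> = g}" using \<alpha>c g by (simp add: S_def)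
    qed
    have inj: "inj_on (\<lambda>h. \<alpha>0 \<otimes> h) (fixpts G (F ^^ a))"
      using \<alpha>0 by (auto simp: inj_on_def fixpts_def)
    show "finite {\<alpha> \<in> S. (F ^^ a) \<alpha> \<otimes> inv \<alpha> = g}" unfolding fib using finA by simp
    show "card {\<alpha> \<in> S. (F ^^ a) \<alpha> \<otimes> inv \<alpha> = g} = card (fixpts G (F ^^ a))"
      unfolding fib using inj by (simp add: card_image)
  qed
  ultimately show ?thesis by simp
qed

lemma ext_class:
  fixes \<xi>t :: "'g \<times> nat \<Rightarrow> complex"
  assumes r: "r \<ge> 1" and m: "m \<ge> 1"
    and ext_char: "is_character (sigma_ext_group G F r m) \<xi>t"
    and h: "h \<in> fixpts G (F ^^ (r * m))" and y: "y \<in> fixpts G (F ^^ (r * m))"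
  shows "\<xi>t (inv h \<otimes> y \<otimes> (F ^^ r) h, r mod (r * m)) = \<xi>t (y, r mod (r * m))"
proof -
  define s where "s = r mod (r * m)"
  define E where "E = sigma_ext_group G F r m"
  have rm: "r * m \<ge> 1" using r m by simp
  have sdvd: "r dvd s" by (simp add: s_def)
  have slt: "s < r * m" using rm by (simp add: s_def)
  have Fs: "(F ^^ s) h = (F ^^ r) h"
  proof (cases "m = 1")
    case True
    then show ?thesis using h by (simp add: s_def fixpts_def)
  next
    case False
    then have "r < r * m" using r m by simp
    then show ?thesis by (simp add: s_def)
  qed
  obtain n \<rho> where rep: "is_rep E n \<rho>" and tr: "\<forall>g\<in>carrier E. \<xi>t g = mat_trace (\<rho> g)"
    using ext_char unfolding is_character_def E_def by blast
  have hc: "h \<in> carrier G" and yc: "y \<in> carrier G" using h y by (auto simp: fixpts_def)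
  have hi: "inv h \<in> fixpts G (F ^^ (r * m))" using h hc by (simp add: fixpts_def)
  have ah: "(inv h, 0) \<in> carrier E" using hi rm by (simp add: E_def sigma_ext_group_def)
  have yy: "(y, s) \<in> carrier E" using y slt sdvd by (simp add: E_def sigma_ext_group_def)
  have ch: "(h, 0) \<in> carrier E" using h rm by (simp add: E_def sigma_ext_group_def)
  have m1: "(inv h, 0) \<otimes>\<^bsub>E\<^esub> (y, s) = (inv h \<otimes> y, s)"
    using slt by (simp add: E_def sigma_ext_group_def)
  have m2: "(inv h \<otimes> y, s) \<otimes>\<^bsub>E\<^esub> (h, 0) = (inv h \<otimes> y \<otimes> (F ^^ r) h, s)"
    using slt Fs by (simp add: E_def sigma_ext_group_def)
  have m3: "(h, 0) \<otimes>\<^bsub>E\<^esub> (inv h, 0) = \<one>\<^bsub>E\<^esub>"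
    using hc rm by (simp add: E_def sigma_ext_group_def)
  have hy: "inv h \<otimes> y \<in> fixpts G (F ^^ (r * m))" using hi y hc yc by (simp add: fixpts_def)
  have iyc: "(inv h \<otimes> y, s) \<in> carrier E" using hy slt sdvd by (simp add: E_def sigma_ext_group_def)
  have "(F ^^ (r * m)) ((F ^^ r) h) = (F ^^ r) ((F ^^ (r * m)) h)"
    by (simp only: Fk_comp add.commute)
  also have "(F ^^ (r * m)) h = h" using h by (simp add: fixpts_def)
  finally have e: "(F ^^ (r * m)) ((F ^^ r) h) = (F ^^ r) h" .
  have Frh: "(F ^^ r) h \<in> fixpts G (F ^^ (r * m))"
    unfolding fixpts_def using e hc Fk_closed by blast
  have hy2: "inv h \<otimes> y \<otimes> (F ^^ r) h \<in> fixpts G (F ^^ (r * m))"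
    using hy Frh hc yc by (simp add: fixpts_def)
  have res: "(inv h \<otimes> y \<otimes> (F ^^ r) h, s) \<in> carrier E"
    using hy2 slt sdvd by (simp add: E_def sigma_ext_group_def)
  have rc: "\<And>g. g \<in> carrier E \<Longrightarrow> \<rho> g \<in> carrier_mat n n"
    and r1: "\<rho> \<one>\<^bsub>E\<^esub> = 1\<^sub>m n"
    and rm': "\<And>g h. g \<in> carrier E \<Longrightarrow> h \<in> carrier E \<Longrightarrow> \<rho> (g \<otimes>\<^bsub>E\<^esub> h) = \<rho> g * \<rho> h"
    using rep unfolding is_rep_def by auto
  have "\<xi>t (inv h \<otimes> y \<otimes> (F ^^ r) h, s) = mat_trace (\<rho> (inv h, 0) * \<rho> (y, s) * \<rho> (h, 0))"
    using tr res rm'[OF ah yy] rm'[OF iyc ch] m1 m2 by metis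
  also have "\<dots> = mat_trace (\<rho> (y, s) * \<rho> (h, 0) * \<rho> (inv h, 0))"
  proof -
    have A: "\<rho> (inv h, 0) \<in> carrier_mat n n" and B: "\<rho> (y, s) \<in> carrier_mat n n"
      and C: "\<rho> (h, 0) \<in> carrier_mat n n" using rc[OF ah] rc[OF yy] rc[OF ch] .
    have "\<rho> (inv h, 0) * \<rho> (y, s) * \<rho> (h, 0) = \<rho> (inv h, 0) * (\<rho> (y, s) * \<rho> (h, 0))"
      using A B C by (rule assoc_mult_mat)
    moreover have "mat_trace (\<rho> (inv h, 0) * (\<rho> (y, s) * \<rho> (h, 0)))
        = mat_trace ((\<rho> (y, s) * \<rho> (h, 0)) * \<rho> (inv h, 0))"
      using A B C by (intro mat_trace_comm[of _ n]) auto
    ultimately show ?thesis by simp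
  qed
  also have "\<dots> = mat_trace (\<rho> (y, s) * 1\<^sub>m n)"
    using rc[OF ah] rc[OF yy] rc[OF ch] rm'[OF ch ah] m3 r1
    by (subst assoc_mult_mat[of _ n n _ n _ n]) auto
  also have "\<dots> = \<xi>t (y, s)" using rc[OF yy] tr yy by simp
  finally show ?thesis by (simp add: s_def)
qed

end

theorem proposition1p9:
  fixes G :: "('g, 'b) monoid_scheme" and F :: "'g \<Rightarrow> 'g"
    and r m :: nat and \<xi> :: "'g \<Rightarrow> complex" and \<xi>t :: "'g \<times> nat \<Rightarrow> complex"
  assumes frob: "frobenius_setting G F"
    and r: "r \<ge> 1" and m: "m \<ge> 1"
    and irr: "is_irred_character (fix_group G (F ^^ (r * m))) \<xi>"
    and stable: "\<forall>x\<in>fixpts G (F ^^ (r * m)). \<xi> ((F ^^ r) x) = \<xi> x"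
    and ext_char: "is_character (sigma_ext_group G F r m) \<xi>t"
    and ext: "\<forall>x\<in>fixpts G (F ^^ (r * m)). \<xi>t (x, 0) = \<xi> x"
  shows "(1 / of_nat (card (fixpts G (F ^^ (r * m))))) *
           (\<Sum>x\<in>fixpts G (F ^^ (r * m)). \<xi>t (normk G F r x, r mod (r * m)))
       = (1 / of_nat (card (fixpts G F))) *
           (\<Sum>g\<in>fixpts G F.
              shintani G (F ^^ (r * m)) (F ^^ r) (\<lambda>x. \<xi>t (x, r mod (r * m))) g)"
proof -
  have grp: "group G" and Fh: "F \<in> hom G G" and Fb: "bij_betw F (carrier G) (carrier G)"
    and fin: "\<And>k. k \<ge> 1 \<Longrightarrow> finite (fixpts G (F ^^ k))"
    and lang: "\<And>k x. k \<ge> 1 \<Longrightarrow> x \<in> carrier G \<Longrightarrow> \<exists>\<alpha>\<in>carrier G. x = inv\<^bsub>G\<^esub> \<alpha> \<otimes>\<^bsub>G\<^esub> (F ^^ k) \<alpha>"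
    using frob unfolding frobenius_setting_def by auto
  interpret frobctx G F by (rule frobctx.intro[OF grp]) (unfold_locales, fact Fh, fact Fb)
  have rm: "r * m \<ge> 1" using r m by simp
  have key: "of_nat (card (fixpts G F)) * (\<Sum>x\<in>fixpts G (F ^^ (r * m)). \<xi>t (normk G F r x, r mod (r * m)))
       = of_nat (card (fixpts G (F ^^ (r * m)))) *
           (\<Sum>g\<in>fixpts G F. shintani G (F ^^ (r * m)) (F ^^ r) (\<lambda>x. \<xi>t (x, r mod (r * m))) g)"
    by (rule main_count[OF lang fin rm]) (use ext_class[OF r m ext_char] in auto)
  have c1: "card (fixpts G F) > 0"
  proof -
    have "\<one>\<^bsub>G\<^esub> \<in> fixpts G F" using fixpts_one[of 1] by simp
    moreover have "finite (fixpts G F)" using fin[of 1] by simp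
    ultimately show ?thesis using card_gt_0_iff by blast
  qed
  have c2: "card (fixpts G (F ^^ (r * m))) > 0"
    using fin[OF rm] fixpts_one[of "r * m"] card_gt_0_iff by blast
  show ?thesis using key c1 c2 by (simp add: field_simps)
qed

end
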